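(* Let $f:\mathbb{R}^2\to\mathbb{R}^2$ be a Topologically Anosov homeomorphism and $z_0\in\mathrm{Fix}(f)$. If there exists $z\in\mathbb{R}^2$ with $\alpha(z)=\emptyset$ and $\omega(z)=\{z_0\}$, then $z_0$ is Lyapunov stable.
   Context: A homeomorphism $f:\mathbb{R}^2\to\mathbb{R}^2$ is Topologically Anosov (TA) if: (i) there is a continuous strictly positive $\epsilon:\mathbb{R}^2\to\mathbb{R}$ such that for all $x\neq y$ there is $k\in\mathbb{Z}$ with $\|f^k(x)-f^k(y)\|>\epsilon(f^k(x))$; and (ii) for every continuous strictly positive $\epsilon$ there is a continuous strictly positive $\delta$ such that every $\delta$-pseudo-orbit is $\epsilon$-shadowed by an orbit. A $\delta$-pseudo-orbit is a sequence $(x_n)_{n\in\mathbb{Z}}$ with $\|f(x_n)-x_{n+1}\|<\delta(f(x_n))$; it is $\epsilon$-shadowed by the orbit of $x$ if $\|x_n-f^n(x)\|<\epsilon(x_n)$ for all $n$. $z_0$ is Lyapunov stable if for every $\epsilon>0$ there is $\delta>0$ with $f^n(B(z_0,\delta))\subset B(z_0,\epsilon)$ for all $n\geq0$. *)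

theory Defs
  imports "HOL-Analysis.Analysis"
begin

type_synonym R2 = "real ^ 2"

definition iter_int :: "(R2 \<Rightarrow> R2) \<Rightarrow> int \<Rightarrow> R2 \<Rightarrow> R2" where
  "iter_int f k x = (if k \<ge> 0 then (f ^^ nat k) x else (inv f ^^ nat (- k)) x)"

definition pos_cont_fun :: "(R2 \<Rightarrow> real) \<Rightarrow> bool" where
  "pos_cont_fun e \<longleftrightarrow> continuous_on UNIV e \<and> (\<forall>x. e x > 0)"

definition pseudo_orbit :: "(R2 \<Rightarrow> R2) \<Rightarrow> (R2 \<Rightarrow> real) \<Rightarrow> (int \<Rightarrow> R2) \<Rightarrow> bool" where
  "pseudo_orbit f \<delta> xs \<longleftrightarrow> (\<forall>n. norm (f (xs n) - xs (n + 1)) < \<delta> (f (xs n)))"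

definition shadows :: "(R2 \<Rightarrow> R2) \<Rightarrow> (R2 \<Rightarrow> real) \<Rightarrow> R2 \<Rightarrow> (int \<Rightarrow> R2) \<Rightarrow> bool" where
  "shadows f \<epsilon> x xs \<longleftrightarrow> (\<forall>n. norm (xs n - iter_int f n x) < \<epsilon> (xs n))"

definition topologically_anosov :: "(R2 \<Rightarrow> R2) \<Rightarrow> bool" where
  "topologically_anosov f \<longleftrightarrow>
     (\<exists>g. homeomorphism UNIV UNIV f g) \<and>
     (\<exists>\<epsilon>. pos_cont_fun \<epsilon> \<and>
        (\<forall>x y. x \<noteq> y \<longrightarrow> (\<exists>k::int. norm (iter_int f k x - iter_int f k y) > \<epsilon> (iter_int f k x)))) \<and>
     (\<forall>\<epsilon>. pos_cont_fun \<epsilon> \<longrightarrow>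
        (\<exists>\<delta>. pos_cont_fun \<delta> \<and>
           (\<forall>xs. pseudo_orbit f \<delta> xs \<longrightarrow> (\<exists>x. shadows f \<epsilon> x xs))))"

definition omega_limit :: "(R2 \<Rightarrow> R2) \<Rightarrow> R2 \<Rightarrow> R2 set" where
  "omega_limit f z = {y. \<exists>r::nat \<Rightarrow> nat. strict_mono r \<and> (\<lambda>k. (f ^^ r k) z) \<longlonglongrightarrow> y}"

definition alpha_limit :: "(R2 \<Rightarrow> R2) \<Rightarrow> R2 \<Rightarrow> R2 set" where
  "alpha_limit f z = {y. \<exists>r::nat \<Rightarrow> nat. strict_mono r \<and> (\<lambda>k. (inv f ^^ r k) z) \<longlonglongrightarrow> y}"

definition lyapunov_stable :: "(R2 \<Rightarrow> R2) \<Rightarrow> R2 \<Rightarrow> bool" where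
  "lyapunov_stable f z0 \<longleftrightarrow>
     (\<forall>\<epsilon>>0. \<exists>\<delta>>0. \<forall>n::nat. (f ^^ n) ` ball z0 \<delta> \<subseteq> ball z0 \<epsilon>)"

end

theory Submission
  imports Defs
begin

lemma iter_int_nat: "iter_int f (int k) x = (f^^k) x"
  by (simp add: iter_int_def)

lemma iter_int_neg: "iter_int f (- int k) x = (inv f ^^ k) x"
proof (cases k)
  case 0 then show ?thesis by (simp add: iter_int_def)
next
  case (Suc m)
  then have "\<not> (- int k \<ge> 0)" "nat (- (- int k)) = k" by auto
  then show ?thesis unfolding iter_int_def by (simp only: if_not_P if_False)
qed

lemma iter_int_step:
  assumes "surj f"
  shows "f (iter_int f n x) = iter_int f (n+1) x"
proof (cases "n \<ge> 0")
  case True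
  then have "nat (n+1) = Suc (nat n)" by simp
  then show ?thesis using True by (simp add: iter_int_def)
next
  case False
  show ?thesis
  proof (cases "n = -1")
    case True
    then show ?thesis using assms by (simp add: iter_int_def surj_f_inv_f)
  next
    case F2: False
    define m where "m = nat (-(n+1))"
    have e1: "nat (-n) = Suc m" using False F2 unfolding m_def by simp
    have a: "iter_int f n x = (inv f ^^ Suc m) x"
      unfolding iter_int_def using False e1 by simp
    have b: "iter_int f (n+1) x = (inv f ^^ m) x"
      unfolding iter_int_def m_def using False F2 by simp
    show ?thesis unfolding a b using assms by (simp add: surj_f_inv_f)
  qed
qed

lemma cont_funpow:
  fixes h :: "R2 \<Rightarrow> R2"
  assumes "continuous_on UNIV h"
  shows "continuous_on UNIV (h^^k)"
proof (induction k)
  case 0 then show ?case by (simp add: continuous_on_id)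
next
  case (Suc k)
  have "(h^^Suc k) = h \<circ> (h^^k)" by simp
  moreover have "continuous_on UNIV (h \<circ> (h^^k))"
    by (rule continuous_on_compose[OF Suc.IH continuous_on_subset[OF assms subset_UNIV]])
  ultimately show ?case by simp
qed

lemma compact_pos_lower:
  fixes \<phi> :: "R2 \<Rightarrow> real"
  assumes "compact S" "continuous_on S \<phi>" "\<forall>y\<in>S. \<phi> y > 0"
  shows "\<exists>c>0. \<forall>y\<in>S. c \<le> \<phi> y"
proof (cases "S = {}")
  case True then show ?thesis by (auto intro: exI[of _ 1])
next
  case False
  from continuous_attains_inf[OF assms(1) False assms(2)] obtain x where
    "x\<in>S" "\<forall>y\<in>S. \<phi> x \<le> \<phi> y" by blast
  then show ?thesis using assms(3) by blast
qed

lemma escape: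
  assumes "alpha_limit f z = {}"
  shows "\<exists>K. \<forall>k\<ge>K. 1 \<le> dist p ((inv f ^^ k) z)"
proof (rule ccontr)
  assume "\<not> ?thesis"
  then have h1: "\<forall>K. \<exists>k\<ge>K. dist p ((inv f^^k) z) < 1"
    by (simp add: not_le)
  have "\<forall>K. \<exists>k\<ge>K. (inv f^^k) z \<in> cball p 1"
  proof
    fix K obtain k where "k \<ge> K" "dist p ((inv f^^k) z) < 1" using h1 by blast
    then show "\<exists>k\<ge>K. (inv f^^k) z \<in> cball p 1" by auto
  qed
  then have "infinite {k. (inv f^^k) z \<in> cball p 1}"
    using infinite_nat_iff_unbounded_le by auto
  then obtain r :: "nat \<Rightarrow> nat" where r: "strict_mono r" "\<forall>n. (inv f^^(r n)) z \<in> cball p 1"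
    using infinite_enumerate by blast
  have "compact (cball p 1)" by simp
  then have "seq_compact (cball p 1)" by (rule compact_imp_seq_compact)
  then obtain l s where ls: "l \<in> cball p 1" "strict_mono s"
      "((\<lambda>n. (inv f^^(r n)) z) \<circ> s) \<longlonglongrightarrow> l"
    using seq_compactE[of "cball p 1" "\<lambda>n. (inv f^^(r n)) z"] r(2) by metis
  have "strict_mono (r \<circ> s)" using r(1) ls(2) strict_mono_o by blast
  moreover have "(\<lambda>k. (inv f ^^ (r \<circ> s) k) z) \<longlonglongrightarrow> l" using ls(3) by (simp add: comp_def)
  ultimately have "l \<in> alpha_limit f z" unfolding alpha_limit_def by blast
  then show False using assms by simp
qed

lemma annulus_index:
  fixes d r :: real
  assumes "0 < d" "d < r"
  shows "\<exists>k::nat. r / (real k + 2) \<le> d \<and> d \<le> r / (real k + 1)"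
proof -
  define t where "t = r / d"
  have t1: "t > 1" using assms unfolding t_def by simp
  define k where "k = nat (floor t - 1)"
  have fl: "floor t \<ge> 1" using t1 by linarith
  have "real k = of_int (floor t - 1)" unfolding k_def using fl by (simp only: of_nat_nat)
  then have kk: "real k + 1 = of_int (floor t)" by simp
  have a: "real k + 1 \<le> t" using kk by linarith
  have b: "t < real k + 2" using kk by linarith
  have "d \<le> r / (real k + 1)"
    using a assms unfolding t_def by (simp add: field_simps)
  moreover have "r / (real k + 2) \<le> d"
    using b assms unfolding t_def by (simp add: field_simps)
  ultimately show ?thesis by blast
qed

lemma track_unique:
  fixes h :: "R2 \<Rightarrow> R2" and z :: R2
  assumes hc: "continuous_on UNIV h" and hi: "inj h"
    and esc: "\<And>p. \<exists>K. \<forall>k\<ge>K. 1 \<le> dist p ((h^^k) z)" and r: "r > 0"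
  shows "\<exists>\<epsilon>. pos_cont_fun \<epsilon> \<and> (\<forall>p. \<epsilon> p \<le> r) \<and>
     (\<forall>y. (\<forall>k. norm ((h^^k) z - (h^^k) y) < \<epsilon> ((h^^k) z)) \<longrightarrow> y = z)"
proof -
  define A where "A k = cball z (r / (real k + 1)) - ball z (r / (real k + 2))" for k :: nat
  have "\<exists>c>0. \<forall>y\<in>A k. c \<le> norm ((h^^k) y - (h^^k) z)" for k
  proof (rule compact_pos_lower)
    show "compact (A k)" unfolding A_def by (intro compact_diff) auto
    show "continuous_on (A k) (\<lambda>y. norm ((h^^k) y - (h^^k) z))"
      by (intro continuous_intros continuous_on_subset[OF cont_funpow[OF hc] subset_UNIV])
    show "\<forall>y\<in>A k. 0 < norm ((h^^k) y - (h^^k) z)"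
    proof
      fix y assume "y \<in> A k"
      then have "dist z y \<ge> r / (real k + 2)" unfolding A_def by auto
      moreover have "r / (real k + 2) > 0" using r by simp
      ultimately have "y \<noteq> z" by auto
      then have "(h^^k) y \<noteq> (h^^k) z" using inj_fn[OF hi] by (meson injD)
      then show "0 < norm ((h^^k) y - (h^^k) z)" by simp
    qed
  qed
  then obtain c where c: "\<And>k. c k > 0" "\<And>k y. y \<in> A k \<Longrightarrow> c k \<le> norm ((h^^k) y - (h^^k) z)"
    by metis
  define q where "q k = (h^^k) z" for k
  define F where "F p = (INF k. c k / 2 + dist p (q k))" for p
  have bdd: "bdd_below (range (\<lambda>k. c k / 2 + dist p (q k)))" for p
  proof (rule bdd_belowI2[of _ 0])
    fix k have "0 < c k" by (rule c(1))
    then show "0 \<le> c k / 2 + dist p (q k)" by (simp add: add_nonneg_nonneg)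
  qed
  have Fle: "F p \<le> c k / 2 + dist p (q k)" for p k
    unfolding F_def by (rule cINF_lower[OF bdd]) simp
  have Flip: "F p - dist p p' \<le> F p'" for p p'
    unfolding F_def[of p'] 
  proof (rule cINF_greatest)
    fix k
    have "F p \<le> c k / 2 + dist p (q k)" by (rule Fle)
    also have "\<dots> \<le> c k / 2 + dist p p' + dist p' (q k)" using dist_triangle[of p "q k" p'] by simp
    finally show "F p - dist p p' \<le> c k / 2 + dist p' (q k)" by simp
  qed simp
  have Fcont: "continuous_on UNIV F"
  proof (rule lipschitz_on_continuous_on)
    show "1-lipschitz_on UNIV F"
    proof (rule lipschitz_onI)
      fix x y :: R2
      have "F x - dist x y \<le> F y" "F y - dist y x \<le> F x" by (rule Flip)+
      then show "dist (F x) (F y) \<le> 1 * dist x y" by (simp add: dist_real_def dist_commute abs_le_iff)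
    qed simp
  qed
  have Fpos: "F p > 0" for p
  proof -
    obtain K where K: "\<forall>k\<ge>K. 1 \<le> dist p (q k)" using esc[of p] unfolding q_def by blast
    define L where "L = Min (insert 1 ((\<lambda>k. c k / 2) ` {..<K}))"
    have Lpos: "L > 0" unfolding L_def using c(1) by (simp add: Min_gr_iff)
    have "L \<le> F p" unfolding F_def
    proof (rule cINF_greatest)
      fix k
      show "L \<le> c k / 2 + dist p (q k)"
      proof (cases "k < K")
        case True
        then have "L \<le> c k / 2" unfolding L_def by (intro Min_le) auto
        moreover have "0 \<le> dist p (q k)" by simp
        ultimately show ?thesis by linarith
      next
        case False
        then have "L \<le> 1" "1 \<le> dist p (q k)" using K unfolding L_def by (auto intro: Min_le)
        then show ?thesis using c(1)[of k] by simp
      qed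
    qed simp
    then show ?thesis using Lpos by simp
  qed
  define \<epsilon> where "\<epsilon> p = min r (F p)" for p
  have pc: "pos_cont_fun \<epsilon>" unfolding pos_cont_fun_def \<epsilon>_def
    using Fcont Fpos r by (auto intro!: continuous_intros)
  have le: "\<forall>p. \<epsilon> p \<le> r" unfolding \<epsilon>_def by simp
  have uniq: "y = z" if tr: "\<forall>k. norm ((h^^k) z - (h^^k) y) < \<epsilon> ((h^^k) z)" for y
  proof (rule ccontr)
    assume yz: "y \<noteq> z"
    have "norm (z - y) < r" using tr[rule_format, of 0] unfolding \<epsilon>_def by simp
    then have "dist z y < r" by (simp add: dist_norm)
    moreover have "dist z y > 0" using yz by simp
    ultimately obtain k :: nat where k: "r / (real k + 2) \<le> dist z y" "dist z y \<le> r / (real k + 1)"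
      using annulus_index by blast
    have "y \<in> A k" unfolding A_def using k by auto
    then have "c k \<le> norm ((h^^k) y - (h^^k) z)" by (rule c(2))
    also have "\<dots> = norm ((h^^k) z - (h^^k) y)" by (simp add: norm_minus_commute)
    also have "\<dots> < \<epsilon> ((h^^k) z)" using tr by blast
    also have "\<dots> \<le> F (q k)" unfolding \<epsilon>_def q_def by simp
    also have "\<dots> \<le> c k / 2" using Fle[of "q k" k] by simp
    finally show False using c(1)[of k] by simp
  qed
  show ?thesis using pc le uniq by blast
qed

lemma funpow_fix: "f z0 = z0 \<Longrightarrow> (f^^j) z0 = z0"
  by (induction j) auto

theorem mainTheorem11:
  fixes f :: "R2 \<Rightarrow> R2" and z0 z :: R2
  assumes "topologically_anosov f"
    and "f z0 = z0"
    and "alpha_limit f z = {}"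
    and "omega_limit f z = {z0}"
  shows "lyapunov_stable f z0"
proof -
  obtain g where hom: "homeomorphism UNIV UNIV f g"
    and shad: "\<And>\<epsilon>. pos_cont_fun \<epsilon> \<Longrightarrow> (\<exists>\<delta>. pos_cont_fun \<delta> \<and>
           (\<forall>xs. pseudo_orbit f \<delta> xs \<longrightarrow> (\<exists>x. shadows f \<epsilon> x xs)))"
    using assms(1) unfolding topologically_anosov_def by blast
  have gf: "\<And>x. g (f x) = x" and fg: "\<And>y. f (g y) = y" and gc: "continuous_on UNIV g"
    using hom unfolding homeomorphism_def by auto
  have bijf: "bij f" by (metis bijI' gf fg)
  have surjf: "surj f" using bijf bij_is_surj by blast
  have invg: "inv f = g" by (rule ext) (metis gf fg inv_f_f bijf bij_is_inj)
  have injg: "inj g" by (metis gf fg injI)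
  have esc: "\<And>p. \<exists>K. \<forall>k\<ge>K. 1 \<le> dist p ((g^^k) z)"
    using escape[OF assms(3)] unfolding invg by blast
  show ?thesis unfolding lyapunov_stable_def
  proof (intro allI impI)
    fix \<eta> :: real assume eta: "\<eta> > 0"
    obtain \<epsilon> where epc: "pos_cont_fun \<epsilon>" and ele: "\<forall>p. \<epsilon> p \<le> \<eta> / 3"
      and uniq: "\<forall>y. (\<forall>k. norm ((g^^k) z - (g^^k) y) < \<epsilon> ((g^^k) z)) \<longrightarrow> y = z"
      using track_unique[OF gc injg esc, of "\<eta> / 3"] eta by auto
    obtain \<delta> where dpc: "pos_cont_fun \<delta>"
      and dsh: "\<forall>xs. pseudo_orbit f \<delta> xs \<longrightarrow> (\<exists>x. shadows f \<epsilon> x xs)"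
      using shad[OF epc] by blast
    define d where "d = \<delta> z0"
    have dpos: "d > 0" using dpc unfolding pos_cont_fun_def d_def by auto
    have "continuous_on UNIV \<delta>" using dpc unfolding pos_cont_fun_def by auto
    then obtain \<rho> where rho: "\<rho> > 0" "\<forall>p. dist p z0 < \<rho> \<longrightarrow> dist (\<delta> p) (\<delta> z0) < d / 2"
      unfolding continuous_on_iff using dpos by (metis UNIV_I half_gt_zero)
    define s where "s = min \<rho> d / 4"
    have spos: "s > 0" unfolding s_def using rho dpos by simp
    obtain rr where rr: "strict_mono rr" "(\<lambda>k. (f ^^ rr k) z) \<longlonglongrightarrow> z0"
      using assms(4) unfolding omega_limit_def by blast
    then obtain N where N: "\<forall>k\<ge>N. dist ((f ^^ rr k) z) z0 < s"
      using spos by (metis lim_sequentially)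
    have "rr (N+1) \<ge> N + 1" using seq_suble[OF rr(1)] by blast
    define M where "M = rr (N+1) - 1"
    have M1: "Suc M = rr (N+1)" unfolding M_def using \<open>rr (N+1) \<ge> N + 1\<close> by simp
    have zM: "dist ((f^^Suc M) z) z0 < s" using N M1 by (metis le_add1)
    have key: "norm ((f^^j) p - (f^^(Suc M + j)) z) < \<epsilon> ((f^^j) p)"
      if p: "dist p z0 < s" for p j
    proof -
      define xs where "xs n = (if n \<le> int M then iter_int f n z else (f^^nat (n - int M - 1)) p)" for n
      have po: "pseudo_orbit f \<delta> xs"
        unfolding pseudo_orbit_def
      proof
        fix n :: int
        consider "n < int M" | "n = int M" | "n > int M" by linarith
        then show "norm (f (xs n) - xs (n + 1)) < \<delta> (f (xs n))"
        proof cases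
          case 1
          then have "f (xs n) = xs (n+1)" unfolding xs_def using iter_int_step[OF surjf] by simp
          then show ?thesis using dpc unfolding pos_cont_fun_def by simp
        next
          case 2
          have a: "f (xs n) = (f^^Suc M) z" unfolding xs_def 2 using iter_int_nat[of f M z] by simp
          have b: "xs (n+1) = p" unfolding xs_def 2 by simp
          have "dist ((f^^Suc M) z) p \<le> dist ((f^^Suc M) z) z0 + dist p z0"
            by (rule dist_triangle2)
          also have "\<dots> < 2 * s" using zM p by simp
          also have "\<dots> \<le> d / 2" unfolding s_def by simp
          finally have c: "dist ((f^^Suc M) z) p < d / 2" .
          have "s \<le> \<rho>" unfolding s_def using rho dpos by simp
          then have "dist (\<delta> ((f^^Suc M) z)) d < d / 2" using rho(2) zM unfolding d_def by simp
          then have "\<bar>\<delta> ((f^^Suc M) z) - d\<bar> < d / 2" by (simp only: dist_real_def)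
          then have "\<delta> ((f^^Suc M) z) > d / 2" by linarith
          then show ?thesis unfolding a b using c by (simp add: dist_norm)
        next
          case 3
          then have "nat (n + 1 - int M - 1) = Suc (nat (n - int M - 1))" by simp
          then have "f (xs n) = xs (n+1)" unfolding xs_def using 3 by simp
          then show ?thesis using dpc unfolding pos_cont_fun_def by simp
        qed
      qed
      then obtain y where y: "shadows f \<epsilon> y xs" using dsh by blast
      have "\<forall>k. norm ((g^^k) z - (g^^k) y) < \<epsilon> ((g^^k) z)"
      proof
        fix k :: nat
        have "- int k \<le> int M" by simp
        then have "xs (- int k) = (g^^k) z" unfolding xs_def using iter_int_neg[of f k z] invg by simp
        moreover have "iter_int f (- int k) y = (g^^k) y" using iter_int_neg[of f k y] invg by simp
        ultimately show "norm ((g^^k) z - (g^^k) y) < \<epsilon> ((g^^k) z)"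
          using y unfolding shadows_def by metis
      qed
      then have yz: "y = z" using uniq by blast
      have "\<not> int (Suc M + j) \<le> int M" by simp
      moreover have "nat (int (Suc M + j) - int M - 1) = j" by simp
      ultimately have "xs (int (Suc M + j)) = (f^^j) p" unfolding xs_def by simp
      moreover have "iter_int f (int (Suc M + j)) y = (f^^(Suc M + j)) z"
        using iter_int_nat yz by metis
      ultimately show ?thesis using y unfolding shadows_def by metis
    qed
    show "\<exists>\<delta>>0. \<forall>n. (f ^^ n) ` ball z0 \<delta> \<subseteq> ball z0 \<eta>"
    proof (intro exI conjI allI)
      show "s > 0" by (rule spos)
      fix n
      show "(f ^^ n) ` ball z0 s \<subseteq> ball z0 \<eta>"
      proof
        fix w assume "w \<in> (f ^^ n) ` ball z0 s"
        then obtain p where p: "dist z0 p < s" and w: "w = (f^^n) p" by auto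
        have k1: "norm ((f^^n) p - (f^^(Suc M + n)) z) < \<eta> / 3"
          using key[of p n] p ele by (smt (verit) dist_commute)
        have k2: "norm (z0 - (f^^(Suc M + n)) z) < \<eta> / 3"
          using key[of z0 n] spos ele funpow_fix[of f z0 n, OF assms(2)] by (smt (verit) dist_self)
        have "dist z0 w \<le> norm ((f^^n) p - (f^^(Suc M + n)) z) + norm (z0 - (f^^(Suc M + n)) z)"
          unfolding w dist_norm by (rule order_trans[OF _ norm_triangle_ineq4[of _ _]]) (simp add: algebra_simps norm_minus_commute)
        then have "dist z0 w < \<eta>" using k1 k2 eta by linarith
        then show "w \<in> ball z0 \<eta>" by simp
      qed
    qed
  qed
qed

end
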